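(* Let $n \ge 1$ and let $S \subset \mathbb{C}^n$ be a unitary 2-design with $s = |S|$ elements. Then the tensor rank (over $\mathbb{C}$) of the matrix multiplication tensor $\mathrm{MM}_n$ is at most $s(s-1)(s-2)+1$.
   Context: For $u, v \in \mathbb{C}^n$, $|u\rangle\langle v|$ denotes the $n\times n$ matrix whose $(i,j)$ entry is $u_i \overline{v_j}$. Let $e_1,\dots,e_n$ be the standard basis of $\mathbb{C}^n$ and $E_{ab} = |e_a\rangle\langle e_b|$. The matrix multiplication tensor is $\mathrm{MM}_n = \sum_{a,b,c=1}^n E_{ab}\otimes E_{bc}\otimes E_{ca} \in \mathbb{C}^{n\times n}\otimes\mathbb{C}^{n\times n}\otimes\mathbb{C}^{n\times n}$ (equivalently, the tensor with $\langle \mathrm{MM}_n, A\otimes B\otimes C\rangle = \operatorname{tr}(ABC)$). The tensor rank of a tensor $T \in V_1\otimes V_2\otimes V_3$ is the least number $r$ such that $T$ is a sum of $r$ tensors of the form $x\otimes y\otimes z$ with $x\in V_1, y\in V_2, z \in V_3$. A finite set $S = \{w_1,\dots,w_s\} \subset \mathbb{C}^n$ is a unitary 2-design if $\sum_{i=1}^s w_i = 0$ and $\frac{1}{s}\sum_{i=1}^s |w_i\rangle\langle w_i| = \frac{1}{n}\mathbf{1}$, where $\mathbf{1}$ is the $n\times n$ identity matrix. *)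

theory Defs
  imports "HOL-Analysis.Analysis"
begin

text \<open>Vectors of C^n are complex^'n, n = CARD('n). n x n matrices are complex^'n^'n.
  A tensor in C^{nxn} (x) C^{nxn} (x) C^{nxn} is represented by its coordinates
  T a b c d e f = coefficient of E_ab (x) E_cd (x) E_ef.\<close>

type_synonym 'n tensor3 = "'n \<Rightarrow> 'n \<Rightarrow> 'n \<Rightarrow> 'n \<Rightarrow> 'n \<Rightarrow> 'n \<Rightarrow> complex"

definition outer :: "complex^'n \<Rightarrow> complex^'n \<Rightarrow> complex^'n^'n" where
  "outer u v = (\<chi> i j. u $ i * cnj (v $ j))"

definition unitary_2_design :: "(complex^'n) set \<Rightarrow> bool" where
  "unitary_2_design S \<longleftrightarrow> finite S \<and> (\<Sum>w\<in>S. w) = 0 \<and>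
     (1 / real (card S)) *\<^sub>R (\<Sum>w\<in>S. outer w w) = (1 / real CARD('n)) *\<^sub>R (mat 1 :: complex^'n^'n)"

definition rank_one :: "complex^'n^'n \<Rightarrow> complex^'n^'n \<Rightarrow> complex^'n^'n \<Rightarrow> 'n tensor3" where
  "rank_one x y z = (\<lambda>a b c d e f. x $ a $ b * y $ c $ d * z $ e $ f)"

definition tensor_rank :: "('n::finite) tensor3 \<Rightarrow> nat" where
  "tensor_rank T = (LEAST r. \<exists>x y z :: nat \<Rightarrow> complex^'n^'n.
      T = (\<lambda>a b c d e f. \<Sum>t<r. rank_one (x t) (y t) (z t) a b c d e f))"

text \<open>MM_n = sum_{a,b,c} E_ab (x) E_bc (x) E_ca.\<close>
definition MM :: "'n tensor3" where
  "MM = (\<lambda>a b c d e f. if b = c \<and> d = e \<and> f = a then 1 else 0)"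

end

theory Submission
  imports Defs
begin

lemma rank_le_aux:
  fixes T :: "('n::finite) tensor3"
  assumes fin: "finite I"
    and T: "T = (\<lambda>a b c d e f. rank_one x0 y0 z0 a b c d e f +
                 (\<Sum>t\<in>I. rank_one (x t) (y t) (z t) a b c d e f))"
  shows "tensor_rank T \<le> card I + 1"
proof -
  obtain h where h: "bij_betw h {0..<card I} I" using ex_bij_betw_nat_finite[OF fin] by blast
  define x' where "x' t = (if t < card I then x (h t) else x0)" for t
  define y' where "y' t = (if t < card I then y (h t) else y0)" for t
  define z' where "z' t = (if t < card I then z (h t) else z0)" for t
  have "T = (\<lambda>a b c d e f. \<Sum>t<card I + 1. rank_one (x' t) (y' t) (z' t) a b c d e f)"
  proof (intro ext)
    fix a b c d e f
    have "(\<Sum>t<card I. rank_one (x' t) (y' t) (z' t) a b c d e f)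
        = (\<Sum>t\<in>{0..<card I}. rank_one (x (h t)) (y (h t)) (z (h t)) a b c d e f)"
      by (intro sum.cong) (auto simp: x'_def y'_def z'_def)
    also have "\<dots> = (\<Sum>t\<in>I. rank_one (x t) (y t) (z t) a b c d e f)"
      using sum.reindex_bij_betw[OF h, of "\<lambda>t. rank_one (x t) (y t) (z t) a b c d e f"] by simp
    finally show "T a b c d e f = (\<Sum>t<card I + 1. rank_one (x' t) (y' t) (z' t) a b c d e f)"
      by (simp add: T x'_def y'_def z'_def)
  qed
  then show ?thesis unfolding tensor_rank_def by (intro Least_le) blast
qed

lemma trip_sum:
  "(\<Sum>u\<in>S. \<Sum>v\<in>S. \<Sum>w\<in>S. (p u::complex) * q v * r w) = sum p S * sum q S * sum r S"
proof -
  have "(\<Sum>u\<in>S. \<Sum>v\<in>S. \<Sum>w\<in>S. (p u::complex) * q v * r w)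
      = (\<Sum>u\<in>S. p u * (\<Sum>v\<in>S. q v * (\<Sum>w\<in>S. r w)))"
    by (simp add: sum_distrib_left mult.assoc)
  also have "\<dots> = sum p S * (sum q S * sum r S)"
    by (simp add: sum_distrib_right)
  finally show ?thesis by (simp add: mult.assoc)
qed

lemma key:
  fixes S :: "(complex^'n) set"
  assumes F0: "\<And>b. (\<Sum>w\<in>S. w $ b) = 0" and F0': "\<And>a. (\<Sum>w\<in>S. cnj (w $ a)) = 0"
   and F1: "\<And>a b. (\<Sum>w\<in>S. cnj (w $ a) * w $ b) = cc * (if a = b then 1 else 0)"
  shows "(\<Sum>u\<in>S. \<Sum>v\<in>S. \<Sum>w\<in>S. (cnj (u$a) * (u$b - v$b)) * (cnj (v$c) * (v$d - w$d))
          * (cnj (w$e) * (w$f - u$f)))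
     = cc^3 * ((if a = b \<and> c = d \<and> e = f then 1 else 0) - (if b = c \<and> d = e \<and> f = a then 1 else 0))"
proof -
    have e: "(cnj (u$a) * (u$b - v$b)) * (cnj (v$c) * (v$d - w$d)) * (cnj (w$e) * (w$f - u$f))
      = (cnj (u$a) * u$b) * (cnj (v$c) * v$d) * (cnj (w$e) * w$f)
      - (cnj (u$a) * u$b * u$f) * (cnj (v$c) * v$d) * (cnj (w$e))
      - (cnj (u$a) * u$b) * (cnj (v$c)) * (cnj (w$e) * w$d * w$f)
      + (cnj (u$a) * u$b * u$f) * (cnj (v$c)) * (cnj (w$e) * w$d)
      - (cnj (u$a)) * (cnj (v$c) * v$b * v$d) * (cnj (w$e) * w$f)
      + (cnj (u$a) * u$f) * (cnj (v$c) * v$b * v$d) * (cnj (w$e))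
      + (cnj (u$a)) * (cnj (v$c) * v$b) * (cnj (w$e) * w$d * w$f)
      - (cnj (u$a) * u$f) * (cnj (v$c) * v$b) * (cnj (w$e) * w$d)" for u v w :: "complex^'n"
      by (simp add: algebra_simps)
    have "(\<Sum>u\<in>S. \<Sum>v\<in>S. \<Sum>w\<in>S. (cnj (u$a) * (u$b - v$b)) * (cnj (v$c) * (v$d - w$d))
          * (cnj (w$e) * (w$f - u$f))) = 
       (\<Sum>w\<in>S. cnj (w$a) * w$b) * (\<Sum>w\<in>S. cnj (w$c) * w$d) * (\<Sum>w\<in>S. cnj (w$e) * w$f)
     - (\<Sum>w\<in>S. cnj (w$a) * w$b * w$f) * (\<Sum>w\<in>S. cnj (w$c) * w$d) * (\<Sum>w\<in>S. cnj (w$e))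
     - (\<Sum>w\<in>S. cnj (w$a) * w$b) * (\<Sum>w\<in>S. cnj (w$c)) * (\<Sum>w\<in>S. cnj (w$e) * w$d * w$f)
     + (\<Sum>w\<in>S. cnj (w$a) * w$b * w$f) * (\<Sum>w\<in>S. cnj (w$c)) * (\<Sum>w\<in>S. cnj (w$e) * w$d)
     - (\<Sum>w\<in>S. cnj (w$a)) * (\<Sum>w\<in>S. cnj (w$c) * w$b * w$d) * (\<Sum>w\<in>S. cnj (w$e) * w$f)
     + (\<Sum>w\<in>S. cnj (w$a) * w$f) * (\<Sum>w\<in>S. cnj (w$c) * w$b * w$d) * (\<Sum>w\<in>S. cnj (w$e))
     + (\<Sum>w\<in>S. cnj (w$a)) * (\<Sum>w\<in>S. cnj (w$c) * w$b) * (\<Sum>w\<in>S. cnj (w$e) * w$d * w$f)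
     - (\<Sum>w\<in>S. cnj (w$a) * w$f) * (\<Sum>w\<in>S. cnj (w$c) * w$b) * (\<Sum>w\<in>S. cnj (w$e) * w$d)"
      unfolding e sum.distrib sum_subtractf trip_sum ..
    also have "\<dots> = cc^3 * ((if a = b \<and> c = d \<and> e = f then 1 else 0) - (if b = c \<and> d = e \<and> f = a then 1 else 0))"
      unfolding F0' F1 mult_zero_left mult_zero_right diff_zero add_0_right
      by (cases "a = b"; cases "c = d"; cases "e = f"; cases "b = c"; cases "d = e"; cases "f = a")
         (simp_all add: power3_eq_cube)
    finally show ?thesis .
qed

theorem theorem1:
  fixes S :: "(complex^'n) set"
  assumes "unitary_2_design S"
  shows "tensor_rank (MM :: 'n tensor3) \<le> card S * (card S - 1) * (card S - 2) + 1"
proof -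
  have fin: "finite S" and sum0: "(\<Sum>w\<in>S. w) = 0"
    and des: "(1 / real (card S)) *\<^sub>R (\<Sum>w\<in>S. outer w w) = (1 / real CARD('n)) *\<^sub>R (mat 1 :: complex^'n^'n)"
    using assms unfolding unitary_2_design_def by auto
  define s where "s = card S"
  have s0: "s \<noteq> 0"
  proof
    assume "s = 0"
    then have "(1 / real CARD('n)) *\<^sub>R (mat 1 :: complex^'n^'n) = 0"
      using des s_def by simp
    then have "(mat 1 :: complex^'n^'n) = 0" by simp
    then have "(mat 1 :: complex^'n^'n) $ undefined $ undefined = 0" by simp
    then show False by (simp add: mat_def)
  qed
  define cc :: complex where "cc = of_real (real s / real CARD('n))"
  have cc0: "cc \<noteq> 0" using s0 by (simp add: cc_def)
  have design: "(\<Sum>w\<in>S. outer w w) = (real s / real CARD('n)) *\<^sub>R (mat 1 :: complex^'n^'n)"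
  proof -
    have "(\<Sum>w\<in>S. outer w w) = real s *\<^sub>R ((1 / real s) *\<^sub>R (\<Sum>w\<in>S. outer w w))"
      using s0 by simp
    also have "\<dots> = (real s / real CARD('n)) *\<^sub>R (mat 1 :: complex^'n^'n)"
      using des s_def by simp
    finally show ?thesis .
  qed
  have F0: "(\<Sum>w\<in>S. w $ b) = 0" for b
    using arg_cong[OF sum0, of "\<lambda>v. v $ b"] by simp
  have F0': "(\<Sum>w\<in>S. cnj (w $ a)) = 0" for a
    using F0[of a] by (metis cnj_sum complex_cnj_zero)
  have F1: "(\<Sum>w\<in>S. cnj (w $ a) * w $ b) = cc * (if a = b then 1 else 0)" for a b
  proof -
    have "(\<Sum>w\<in>S. outer w w) $ b $ a = (\<Sum>w\<in>S. cnj (w $ a) * w $ b)"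
      by (simp add: outer_def mult.commute)
    moreover have "((real s / real CARD('n)) *\<^sub>R (mat 1 :: complex^'n^'n)) $ b $ a
        = cc * (if a = b then 1 else 0)"
      unfolding vector_scaleR_component by (auto simp: mat_def cc_def scaleR_conv_of_real)
    ultimately show ?thesis using design by simp
  qed
  define D where "D = (SIGMA u:S. SIGMA v:(S - {u}). S - {u, v})"
  have finD: "finite D" using fin unfolding D_def by auto
  have cardD: "card D = s * (s - 1) * (s - 2)"
  proof -
    have "card D = (\<Sum>u\<in>S. \<Sum>v\<in>S - {u}. card (S - {u, v}))"
      unfolding D_def using fin by simp
    also have "\<dots> = (\<Sum>u\<in>S. \<Sum>v\<in>S - {u}. s - 2)"
      by (intro sum.cong refl) (auto simp: card_Diff_subset fin s_def card_insert_if)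
    also have "\<dots> = (\<Sum>u\<in>S. (s - 1) * (s - 2))"
      by (intro sum.cong refl) (simp add: card_Diff_singleton fin s_def)
    also have "\<dots> = s * (s - 1) * (s - 2)" by (simp add: s_def)
    finally show ?thesis .
  qed
  define x :: "(complex^'n) \<times> (complex^'n) \<times> (complex^'n) \<Rightarrow> complex^'n^'n"
    where "x = (\<lambda>(u, v, w). \<chi> a b. (- 1 / cc^3) * (cnj (u$a) * (u$b - v$b)))"
  define y :: "(complex^'n) \<times> (complex^'n) \<times> (complex^'n) \<Rightarrow> complex^'n^'n"
    where "y = (\<lambda>(u, v, w). \<chi> c d. cnj (v$c) * (v$d - w$d))"
  define z :: "(complex^'n) \<times> (complex^'n) \<times> (complex^'n) \<Rightarrow> complex^'n^'n"
    where "z = (\<lambda>(u, v, w). \<chi> e f. cnj (w$e) * (w$f - u$f))"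
  have "(MM :: 'n tensor3) = (\<lambda>a b c d e f. rank_one (mat 1) (mat 1) (mat 1) a b c d e f +
                 (\<Sum>t\<in>D. rank_one (x t) (y t) (z t) a b c d e f))"
  proof (intro ext)
    fix a b c d e f :: 'n
    have "(\<Sum>t\<in>D. rank_one (x t) (y t) (z t) a b c d e f)
        = (\<Sum>t\<in>S \<times> S \<times> S. rank_one (x t) (y t) (z t) a b c d e f)"
      by (rule sum.mono_neutral_left)
        (use fin in \<open>auto simp: D_def rank_one_def x_def y_def z_def\<close>)
    also have "\<dots> = (\<Sum>u\<in>S. \<Sum>v\<in>S. \<Sum>w\<in>S. rank_one (x (u, v, w)) (y (u, v, w)) (z (u, v, w)) a b c d e f)"
      by (simp add: sum.cartesian_product)
    also have "\<dots> = (\<Sum>u\<in>S. \<Sum>v\<in>S. \<Sum>w\<in>S. (- 1 / cc^3) * ((cnj (u$a) * (u$b - v$b)) * (cnj (v$c) * (v$d - w$d))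
          * (cnj (w$e) * (w$f - u$f))))"
      by (simp add: rank_one_def x_def y_def z_def mult.assoc)
    also have "\<dots> = (- 1 / cc^3) * (\<Sum>u\<in>S. \<Sum>v\<in>S. \<Sum>w\<in>S. (cnj (u$a) * (u$b - v$b)) * (cnj (v$c) * (v$d - w$d))
          * (cnj (w$e) * (w$f - u$f)))"
      by (simp add: sum_distrib_left)
    also have "\<dots> = (if b = c \<and> d = e \<and> f = a then 1 else 0) - (if a = b \<and> c = d \<and> e = f then 1 else 0)"
      using key[OF F0 F0' F1, where a=a and b=b and c=c and d=d and e=e and f=f] cc0 by (simp add: field_simps)
    finally show "(MM :: 'n tensor3) a b c d e f = rank_one (mat 1) (mat 1) (mat 1) a b c d e f +
                 (\<Sum>t\<in>D. rank_one (x t) (y t) (z t) a b c d e f)"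
      by (simp add: MM_def rank_one_def mat_def)
  qed
  then have "tensor_rank (MM :: 'n tensor3) \<le> card D + 1"
    by (rule rank_le_aux[OF finD])
  then show ?thesis using cardD s_def by simp
qed

end
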